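(* Let $K\ge2$. For $\alpha\in\mathbb{R}$ let $s_\alpha(v)=(1-\alpha)v+\frac{\alpha}{K}$ (applied componentwise to vectors), let $q_{\mathrm{L}}:\mathbb{R}^K\to\Delta_{K-1}$ be the softmax map, let $q_{\mathrm{RL},\alpha}(g)=s_\alpha^{-1}(q_{\mathrm{L}}(g))$ for $\alpha\neq1$ (with $k$-th component $q_{\mathrm{RL},\alpha,k}(g)$), and let $D_{\mathrm{SKL},\alpha}(p\|q)=\sum_{k=1}^K s_\alpha(p_k)\ln\frac{s_\alpha(p_k)}{s_\alpha(q_k)}$ for $p,q\in s_\alpha^{-1}(\Delta_{K-1})$. Then: (B1) for $g\in\mathbb{R}^K$ and $k=1,\dots,K$, $q_{\mathrm{RL},\alpha,k}(g)$ can range over $[-\frac{\alpha}{K(1-\alpha)},\frac{K-\alpha}{K(1-\alpha)}]$ if $\alpha\in[0,1)$ and over $[\frac{K-\alpha}{K(1-\alpha)},-\frac{\alpha}{K(1-\alpha)}]$ if $\alpha\in(1,\frac{K}{K-1}]$, and each of these intervals contains $[0,1]$; (B2) $\sum_{k=1}^K q_{\mathrm{RL},\alpha,k}(g)=1$ for all $g\in\mathbb{R}^K$ and all $\alpha\neq1$; (B3) for $\alpha\in[0,1)\cup(1,\frac{K}{K-1}]$ and all $p,q\in s_\alpha^{-1}(\Delta_{K-1})$, $D_{\mathrm{SKL},\alpha}(p\|q)\ge0$, with equality if and only if $p=q$; moreover $D_{\mathrm{SKL},1}(p\|q)=0$ for all $p,q\in s_1^{-1}(\Delta_{K-1})$;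 (B4) for every $\alpha\in[0,\frac{K}{K-1}]$, $D_{\mathrm{SKL},\alpha}(p\|q)$ is jointly convex in $(p,q)$: $D_{\mathrm{SKL},\alpha}(rp_1+(1-r)p_2\|rq_1+(1-r)q_2)\le rD_{\mathrm{SKL},\alpha}(p_1\|q_1)+(1-r)D_{\mathrm{SKL},\alpha}(p_2\|q_2)$ for all $p_1,p_2,q_1,q_2\in s_\alpha^{-1}(\Delta_{K-1})$ and $r\in[0,1]$; (B5) for $\alpha\in[0,1)\cup(1,\frac{K}{K-1}]$, $\operatorname{argmin}_{g\in\mathbb{R}^K,\,g_K=0}D_{\mathrm{SKL},\alpha}((1,0,\dots,0)^\top\|q_{\mathrm{L}}(g))=(\infty,0,\dots,0)^\top$; (B6) $\operatorname{argmin}_{g\in\mathbb{R}^K,\,g_K=0}D_{\mathrm{SKL},\alpha}((1,0,\dots,0)^\top\|q_{\mathrm{RL},\alpha}(g))$ equals $(\infty,0,\dots,0)^\top$ if $\alpha=0$, equals $(\ln(\frac{K}{\alpha}+1-K),0,\dots,0)^\top$ for any $\alpha\in(0,1)\cup(1,\frac{K}{K-1})$, and equals $(-\infty,0,\dots,0)^\top$ if $\alpha=\frac{K}{K-1}$; (B7) for any $\alpha\in(1,\frac{K}{K-1}]$, $p,q\in s_\alpha^{-1}(\Delta_{K-1})$ and $g\in\mathbb{R}^K$: $D_{\mathrm{SKL},\alpha}(p\|q)=D_{\mathrm{SKL},K-(K-1)\alpha}(\frac{\mathbf{1}-p}{K-1}\|\frac{\mathbf{1}-q}{K-1})$, $D_{\mathrm{SKL},\alpha}(p\|q_{\mathrm{RL},\alpha}(g))=D_{\mathrm{SKL},K-(K-1)\alpha}(\frac{\mathbf{1}-p}{K-1}\|q_{\mathrm{RL},K-(K-1)\alpha}(g))$,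 $K-(K-1)\alpha\in[0,1)$, and $\frac{\mathbf{1}-p}{K-1}\in s_{K-(K-1)\alpha}^{-1}(\Delta_{K-1})$; (B8) if $K=2$, then for any $\alpha\in(1,2]$, $p\in s_\alpha^{-1}(\Delta_1)$ and $g\in\mathbb{R}^2$: $D_{\mathrm{SKL},\alpha}(p\|q_{\mathrm{L}}(g))=D_{\mathrm{SKL},2-\alpha}(\mathbf{1}-p\|q_{\mathrm{L}}(-g))=D_{\mathrm{SKL},2-\alpha}(p\|q_{\mathrm{L}}(g))$, $D_{\mathrm{SKL},\alpha}(p\|q_{\mathrm{RL},\alpha}(g))=D_{\mathrm{SKL},2-\alpha}(\mathbf{1}-p\|q_{\mathrm{RL},2-\alpha}(g))=D_{\mathrm{SKL},2-\alpha}(p\|q_{\mathrm{RL},2-\alpha}(-g))$, $2-\alpha\in[0,1)$, and $\mathbf{1}-p\in s_{2-\alpha}^{-1}(\Delta_1)$.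
   Context: $\Delta_{K-1}=\{p\in\mathbb{R}^K: p_k\ge0,\ \sum_k p_k=1\}$ is the probability simplex and $\mathbf{1}=(1,\dots,1)^\top\in\mathbb{R}^K$. The smoothing map is $s_\alpha(v)=(1-\alpha)v+\frac{\alpha}{K}$ for scalars, applied componentwise to vectors $v\in\mathbb{R}^K$; for $\alpha\ne1$ its inverse is $s_\alpha^{-1}(u)=(u-\frac{\alpha}{K})/(1-\alpha)$ componentwise. The set $s_\alpha^{-1}(\Delta_{K-1})$ is $\{v\in\mathbb{R}^K: s_\alpha(v)\in\Delta_{K-1}\}$ (for $\alpha\neq1$ this is the image of $\Delta_{K-1}$ under $s_\alpha^{-1}$; for $\alpha=1$ it is all of $\mathbb{R}^K$). The softmax (logit model) is $q_{\mathrm{L}}(g)=\big(e^{g_1}/\sum_l e^{g_l},\dots,e^{g_K}/\sum_l e^{g_l}\big)^\top$ and the roughened logit model is $q_{\mathrm{RL},\alpha}(g)=s_\alpha^{-1}(q_{\mathrm{L}}(g))$. The smoothed KL divergence is $D_{\mathrm{SKL},\alpha}(p\|q)=\sum_k s_\alpha(p_k)\ln\frac{s_\alpha(p_k)}{s_\alpha(q_k)}$ with the conventions $0\ln(0/c)=0$ and $c\ln(c/0)=+\infty$ for $c>0$; for $\alpha=0$ it is the KL divergence. In (B5)–(B6), minimizers are understood with coordinates in the extended real line, the maps $q_{\mathrm{L}},q_{\mathrm{RL},\alpha}$ being extended by continuity (e.g. $(\pm\infty,0,\dots,0)^\top$ denotes the limit $g_1\to\pm\infty$ with the remaining coordinates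 $0$). For $K=2$, $\mathbf{1}-p=(1-p_1,1-p_2)^\top$. *)

theory Defs
  imports "HOL-Analysis.Analysis"
begin

text \<open>Vectors in R^K are represented as functions nat => real; only the
  coordinates 0..K-1 (paper's 1..K) are meaningful.\<close>

definition smooth :: "nat \<Rightarrow> real \<Rightarrow> real \<Rightarrow> real" where
  "smooth K \<alpha> v = (1 - \<alpha>) * v + \<alpha> / real K"

definition prob_simplex :: "nat \<Rightarrow> (nat \<Rightarrow> real) set" where
  "prob_simplex K = {p. (\<forall>k<K. 0 \<le> p k) \<and> (\<Sum>k<K. p k) = 1}"

definition smooth_pre :: "nat \<Rightarrow> real \<Rightarrow> (nat \<Rightarrow> real) set" where
  "smooth_pre K \<alpha> = {v. (\<lambda>k. smooth K \<alpha> (v k)) \<in> prob_simplex K}"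

definition qL :: "nat \<Rightarrow> (nat \<Rightarrow> real) \<Rightarrow> (nat \<Rightarrow> real)" where
  "qL K g = (\<lambda>k. exp (g k) / (\<Sum>l<K. exp (g l)))"

definition qRL :: "nat \<Rightarrow> real \<Rightarrow> (nat \<Rightarrow> real) \<Rightarrow> (nat \<Rightarrow> real)" where
  "qRL K \<alpha> g = (\<lambda>k. (qL K g k - \<alpha> / real K) / (1 - \<alpha>))"

definition skl_term :: "real \<Rightarrow> real \<Rightarrow> ereal" where
  "skl_term c d = (if c = 0 then 0 else if d = 0 then \<infinity> else ereal (c * ln (c / d)))"

definition DSKL :: "nat \<Rightarrow> real \<Rightarrow> (nat \<Rightarrow> real) \<Rightarrow> (nat \<Rightarrow> real) \<Rightarrow> ereal" where
  "DSKL K \<alpha> p q = (\<Sum>k<K. skl_term (smooth K \<alpha> (p k)) (smooth K \<alpha> (q k)))"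

end

theory Submission
  imports Defs
begin

lemma skl_real: "d > 0 \<Longrightarrow> skl_term c d = ereal (c * ln (c / d))"
  by (simp add: skl_term_def)

lemma skl_not_minf: "skl_term c d \<noteq> -\<infinity>"
  by (simp add: skl_term_def)

lemma skl_same: "skl_term c c = 0"
  by (simp add: skl_term_def)

lemma real_kl_ge:
  fixes c d :: real assumes "c > 0" "d > 0"
  shows "c - d \<le> c * ln (c / d)" and "c * ln (c / d) = c - d \<Longrightarrow> c = d"
proof -
  have e: "c * ln (c / d) = - c * ln (d / c)" using assms by (simp add: ln_div algebra_simps)
  have "ln (d / c) \<le> d / c - 1" using assms by (intro ln_le_minus_one) simp
  then have "c * ln (d / c) \<le> c * (d / c - 1)" using assms by (intro mult_left_mono) auto
  also have "\<dots> = d - c" using assms by (simp add: field_simps)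
  finally show "c - d \<le> c * ln (c / d)" using e by simp
  assume "c * ln (c / d) = c - d"
  then have "c * ln (d / c) = d - c" using e by linarith
  also have "d - c = c * (d / c - 1)" using assms by (simp add: field_simps)
  finally have "c * ln (d / c) = c * (d / c - 1)" .
  then have "ln (d / c) = d / c - 1" using assms by simp
  then have "d / c = 1" using assms by (intro ln_eq_minus_one) auto
  then show "c = d" using assms by simp
qed

lemma skl_ge: assumes "c \<ge> 0" "d \<ge> 0" shows "ereal (c - d) \<le> skl_term c d"
  using assms real_kl_ge(1)[of c d] by (auto simp: skl_term_def)

lemma skl_eq: assumes "c \<ge> 0" "d \<ge> 0" "skl_term c d = ereal (c - d)" shows "c = d"
  using assms real_kl_ge(2)[of c d] by (auto simp: skl_term_def split: if_splits)

lemma gibbs: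
  fixes P Q :: "nat \<Rightarrow> real"
  assumes P: "\<forall>k<K. 0 \<le> P k" and Q: "\<forall>k<K. 0 \<le> Q k" and S: "(\<Sum>k<K. P k) = (\<Sum>k<K. Q k)"
  shows "0 \<le> (\<Sum>k<K. skl_term (P k) (Q k))"
    and "(\<Sum>k<K. skl_term (P k) (Q k)) = 0 \<longleftrightarrow> (\<forall>k<K. P k = Q k)"
proof -
  have "(\<Sum>k<K. ereal (P k - Q k)) \<le> (\<Sum>k<K. skl_term (P k) (Q k))"
    by (rule sum_mono) (use P Q skl_ge in auto)
  moreover have "(\<Sum>k<K. ereal (P k - Q k)) = 0"
    using S by (simp add: sum_subtractf)
  ultimately show "0 \<le> (\<Sum>k<K. skl_term (P k) (Q k))" by (simp add: zero_ereal_def)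
  show "(\<Sum>k<K. skl_term (P k) (Q k)) = 0 \<longleftrightarrow> (\<forall>k<K. P k = Q k)"
  proof
    assume "\<forall>k<K. P k = Q k"
    then show "(\<Sum>k<K. skl_term (P k) (Q k)) = 0" by (simp add: skl_same)
  next
    assume z: "(\<Sum>k<K. skl_term (P k) (Q k)) = 0"
    define r where "r k = real_of_ereal (skl_term (P k) (Q k))" for k
    have ni: "\<forall>k<K. skl_term (P k) (Q k) \<noteq> \<infinity>"
      using z sum_Pinfty[of "\<lambda>k. skl_term (P k) (Q k)" "{..<K}"] by auto
    have rr: "skl_term (P k) (Q k) = ereal (r k)" if "k < K" for k
      using ni that skl_not_minf[of "P k" "Q k"] unfolding r_def
      by (cases "skl_term (P k) (Q k)") auto
    have "ereal (\<Sum>k<K. r k) = 0" using z rr by simp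
    then have s0: "(\<Sum>k<K. r k) = 0" by simp
    have ge: "\<forall>k<K. 0 \<le> r k - (P k - Q k)"
      using rr skl_ge P Q by (metis diff_ge_0_iff_ge ereal_less_eq(3))
    have "(\<Sum>k<K. r k - (P k - Q k)) = 0" using s0 S by (simp add: sum_subtractf)
    then have "\<forall>k<K. r k - (P k - Q k) = 0"
      using sum_nonneg_eq_0_iff[of "{..<K}" "\<lambda>k. r k - (P k - Q k)"] ge by auto
    then show "\<forall>k<K. P k = Q k" using rr skl_eq P Q by force
  qed
qed

lemma smooth_qRL: "\<alpha> \<noteq> 1 \<Longrightarrow> smooth K \<alpha> (qRL K \<alpha> g k) = qL K g k"
  by (simp add: smooth_def qRL_def field_simps)

lemma smooth_inj: "\<alpha> \<noteq> 1 \<Longrightarrow> smooth K \<alpha> x = smooth K \<alpha> y \<longleftrightarrow> x = y"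
  by (auto simp: smooth_def)

lemma sum_smooth: "K > 0 \<Longrightarrow> (\<Sum>k<K. smooth K \<alpha> (v k)) = (1 - \<alpha>) * (\<Sum>k<K. v k) + \<alpha>"
  by (simp add: smooth_def sum.distrib sum_distrib_left)

lemma qL_pos: "K > 0 \<Longrightarrow> qL K g k > 0"
  unfolding qL_def by (intro divide_pos_pos) (auto intro!: sum_pos)

lemma qL_sum: "K > 0 \<Longrightarrow> (\<Sum>k<K. qL K g k) = 1"
proof -
  assume "K > 0"
  then have "(\<Sum>l<K. exp (g l)) > 0" by (intro sum_pos) auto
  then show ?thesis unfolding qL_def by (simp add: sum_divide_distrib[symmetric])
qed

lemma sum_if_one:
  fixes a b :: real
  assumes "k < K" shows "(\<Sum>l<K. if l = k then a else b) = a + (real K - 1) * b"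
proof -
  have "(\<Sum>l<K. if l = k then a else b) = (if k = k then a else b) + (\<Sum>l\<in>{..<K} - {k}. if l = k then a else b)"
    using assms by (intro sum.remove) auto
  also have "(\<Sum>l\<in>{..<K} - {k}. if l = k then a else b) = (\<Sum>l\<in>{..<K} - {k}. b)"
    by (intro sum.cong) auto
  also have "\<dots> = (real K - 1) * b" using assms by (simp add: of_nat_diff)
  finally show ?thesis by simp
qed

lemma qL_less1:
  assumes "K \<ge> 2" "k < K" shows "qL K g k < 1"
proof -
  have "(\<Sum>l<K. exp (g l)) = exp (g k) + (\<Sum>l\<in>{..<K} - {k}. exp (g l))"
    using assms by (intro sum.remove) auto
  moreover have "(\<Sum>l\<in>{..<K} - {k}. exp (g l)) > 0"
  proof (intro sum_pos)
    show "{..<K} - {k} \<noteq> {}"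
    proof (cases "k = 0")
      case True then have "1 \<in> {..<K} - {k}" using assms by auto
      then show ?thesis by blast
    next
      case False then have "0 \<in> {..<K} - {k}" using assms by auto
      then show ?thesis by blast
    qed
  qed auto
  moreover have aux: "e / (e + s) < 1" if "s > 0" "e > 0" for e s :: real
    using that by (simp add: divide_less_eq)
  ultimately show ?thesis unfolding qL_def using aux[of _ "exp (g k)"] by simp
qed

lemma range_qL:
  assumes "K \<ge> 2" "k < K" shows "range (\<lambda>g. qL K g k) = {0<..<1}"
proof
  show "range (\<lambda>g. qL K g k) \<subseteq> {0<..<1}" using qL_pos qL_less1 assms by fastforce
  show "{0<..<1} \<subseteq> range (\<lambda>g. qL K g k)"
  proof
    fix x :: real assume x: "x \<in> {0<..<1}"
    define c where "c = x * (real K - 1) / (1 - x)"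
    have c: "c > 0" using x assms unfolding c_def by (auto intro!: divide_pos_pos)
    define g where "g = (\<lambda>l. if l = k then ln c else 0)"
    have "(\<Sum>l<K. exp (g l)) = (\<Sum>l<K. if l = k then c else 1)"
      unfolding g_def using c by (intro sum.cong) auto
    also have "\<dots> = c + (real K - 1)" using sum_if_one[OF assms(2)] by simp
    finally have S: "(\<Sum>l<K. exp (g l)) = c + (real K - 1)" .
    have "qL K g k = c / (c + (real K - 1))" unfolding qL_def S using c g_def by simp
    also have "\<dots> = x"
    proof -
      have K1: "real K - 1 > 0" using assms by simp
      have x1: "1 - x > 0" using x by simp
      have "c + (real K - 1) = (real K - 1) / (1 - x)" unfolding c_def using x1 by (simp add: field_simps)
      then show ?thesis unfolding c_def using K1 x1 by simp
    qed
    finally show "x \<in> range (\<lambda>g. qL K g k)" by (metis rangeI)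
  qed
qed

lemma range_qRL:
  assumes "K \<ge> 2" "k < K"
  shows "range (\<lambda>g. qRL K \<alpha> g k) = (\<lambda>x. (x - \<alpha> / real K) / (1 - \<alpha>)) ` {0<..<1}"
proof -
  have "range (\<lambda>g. qRL K \<alpha> g k) = (\<lambda>x. (x - \<alpha> / real K) / (1 - \<alpha>)) ` range (\<lambda>g. qL K g k)"
    unfolding qRL_def by (simp add: image_image)
  then show ?thesis using range_qL[OF assms] by simp
qed

lemma image_aff_pos:
  fixes \<alpha> :: real assumes "\<alpha> < 1"
  shows "(\<lambda>x. (x - a) / (1 - \<alpha>)) ` {0<..<1} = {(0 - a) / (1 - \<alpha>) <..< (1 - a) / (1 - \<alpha>)}"
proof -
  have p: "1 - \<alpha> > 0" using assms by simp
  show ?thesis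
  proof
    show "(\<lambda>x. (x - a) / (1 - \<alpha>)) ` {0<..<1} \<subseteq> {(0 - a) / (1 - \<alpha>) <..< (1 - a) / (1 - \<alpha>)}"
    proof (rule image_subsetI)
      fix x :: real assume "x \<in> {0<..<1}"
      then have "0 - a < x - a" "x - a < 1 - a" by auto
      then show "(x - a) / (1 - \<alpha>) \<in> {(0 - a) / (1 - \<alpha>) <..< (1 - a) / (1 - \<alpha>)}"
        using divide_strict_right_mono[OF _ p] by (simp del: diff_0)
    qed
    show "{(0 - a) / (1 - \<alpha>) <..< (1 - a) / (1 - \<alpha>)} \<subseteq> (\<lambda>x. (x - a) / (1 - \<alpha>)) ` {0<..<1}"
    proof
      fix y assume y: "y \<in> {(0 - a) / (1 - \<alpha>) <..< (1 - a) / (1 - \<alpha>)}"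
      define x where "x = (1 - \<alpha>) * y + a"
      have y1: "(0 - a) / (1 - \<alpha>) < y" and y2: "y < (1 - a) / (1 - \<alpha>)" using y by auto
      have "0 - a < y * (1 - \<alpha>)" using y1 p by (metis pos_divide_less_eq)
      moreover have "y * (1 - \<alpha>) < 1 - a" using y2 p by (metis pos_less_divide_eq)
      ultimately have "x \<in> {0<..<1}" unfolding x_def by (auto simp: algebra_simps)
      moreover have "y = (x - a) / (1 - \<alpha>)" using p unfolding x_def by simp
      ultimately show "y \<in> (\<lambda>x. (x - a) / (1 - \<alpha>)) ` {0<..<1}" by blast
    qed
  qed
qed

lemma image_aff_neg:
  fixes \<alpha> :: real assumes "\<alpha> > 1"
  shows "(\<lambda>x. (x - a) / (1 - \<alpha>)) ` {0<..<1} = {(1 - a) / (1 - \<alpha>) <..< (0 - a) / (1 - \<alpha>)}"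
proof -
  have p: "1 - \<alpha> < 0" using assms by simp
  show ?thesis
  proof
    show "(\<lambda>x. (x - a) / (1 - \<alpha>)) ` {0<..<1} \<subseteq> {(1 - a) / (1 - \<alpha>) <..< (0 - a) / (1 - \<alpha>)}"
    proof (rule image_subsetI)
      fix x :: real assume "x \<in> {0<..<1}"
      then have "0 - a < x - a" "x - a < 1 - a" by auto
      then show "(x - a) / (1 - \<alpha>) \<in> {(1 - a) / (1 - \<alpha>) <..< (0 - a) / (1 - \<alpha>)}"
        using divide_strict_right_mono_neg[OF _ p] by (simp del: diff_0)
    qed
    show "{(1 - a) / (1 - \<alpha>) <..< (0 - a) / (1 - \<alpha>)} \<subseteq> (\<lambda>x. (x - a) / (1 - \<alpha>)) ` {0<..<1}"
    proof
      fix y assume y: "y \<in> {(1 - a) / (1 - \<alpha>) <..< (0 - a) / (1 - \<alpha>)}"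
      define x where "x = (1 - \<alpha>) * y + a"
      have y1: "(1 - a) / (1 - \<alpha>) < y" and y2: "y < (0 - a) / (1 - \<alpha>)" using y by auto
      have "y * (1 - \<alpha>) < 1 - a" using y1 p by (metis neg_divide_less_eq)
      moreover have "0 - a < y * (1 - \<alpha>)" using y2 p by (metis neg_less_divide_eq)
      ultimately have "x \<in> {0<..<1}" unfolding x_def by (auto simp: algebra_simps)
      moreover have "y = (x - a) / (1 - \<alpha>)" using p unfolding x_def by simp
      ultimately show "y \<in> (\<lambda>x. (x - a) / (1 - \<alpha>)) ` {0<..<1}" by blast
    qed
  qed
qed

lemma B1a_single:
  fixes \<alpha> :: real
  assumes K2: "K \<ge> 2" and a: "0 \<le> \<alpha> \<and> \<alpha> < 1"
  shows "(\<forall>k<K. (\<lambda>g. qRL K \<alpha> g k) ` UNIV \<subseteq>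
                 {- \<alpha> / (real K * (1 - \<alpha>)) .. (real K - \<alpha>) / (real K * (1 - \<alpha>))}
            \<and> closure ((\<lambda>g. qRL K \<alpha> g k) ` UNIV) =
                 {- \<alpha> / (real K * (1 - \<alpha>)) .. (real K - \<alpha>) / (real K * (1 - \<alpha>))})
      \<and> {0..1} \<subseteq> {- \<alpha> / (real K * (1 - \<alpha>)) .. (real K - \<alpha>) / (real K * (1 - \<alpha>))}"
proof -
  have Kp: "real K > 0" using K2 by simp
  have e1: "(0 - \<alpha> / real K) / (1 - \<alpha>) = - \<alpha> / (real K * (1 - \<alpha>))" using Kp a by (simp add: field_simps)
  have e2: "(1 - \<alpha> / real K) / (1 - \<alpha>) = (real K - \<alpha>) / (real K * (1 - \<alpha>))" using Kp a by (simp add: field_simps)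
  have lt: "- \<alpha> / (real K * (1 - \<alpha>)) < (real K - \<alpha>) / (real K * (1 - \<alpha>))"
    using Kp a by (intro divide_strict_right_mono) auto
  have R: "range (\<lambda>g. qRL K \<alpha> g k) = {- \<alpha> / (real K * (1 - \<alpha>)) <..< (real K - \<alpha>) / (real K * (1 - \<alpha>))}"
    if "k < K" for k
    using range_qRL[OF K2 that, of \<alpha>] image_aff_pos[of \<alpha> "\<alpha> / real K"] a e1 e2 by simp
  have l0: "- \<alpha> / (real K * (1 - \<alpha>)) \<le> 0" using a Kp by (intro divide_nonpos_pos) auto
  have "\<alpha> * 1 \<le> \<alpha> * real K" using a K2 by (intro mult_left_mono) auto
  then have "real K * (1 - \<alpha>) \<le> real K - \<alpha>" by (simp add: algebra_simps)
  moreover have "real K * (1 - \<alpha>) > 0" using a Kp by simp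
  ultimately have h1: "1 \<le> (real K - \<alpha>) / (real K * (1 - \<alpha>))" by simp
  show ?thesis using R lt l0 h1 by auto
qed

lemma B1b_single:
  fixes \<alpha> :: real
  assumes K2: "K \<ge> 2" and a: "1 < \<alpha> \<and> \<alpha> \<le> real K / (real K - 1)"
  shows "(\<forall>k<K. (\<lambda>g. qRL K \<alpha> g k) ` UNIV \<subseteq>
                 {(real K - \<alpha>) / (real K * (1 - \<alpha>)) .. - \<alpha> / (real K * (1 - \<alpha>))}
            \<and> closure ((\<lambda>g. qRL K \<alpha> g k) ` UNIV) =
                 {(real K - \<alpha>) / (real K * (1 - \<alpha>)) .. - \<alpha> / (real K * (1 - \<alpha>))})
      \<and> {0..1} \<subseteq> {(real K - \<alpha>) / (real K * (1 - \<alpha>)) .. - \<alpha> / (real K * (1 - \<alpha>))}"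
proof -
  have Kp: "real K > 0" using K2 by simp
  have K1: "real K - 1 > 0" using K2 by simp
  have aK: "\<alpha> * (real K - 1) \<le> real K" using a K1 by (simp add: le_divide_eq)
  have e1: "(0 - \<alpha> / real K) / (1 - \<alpha>) = - \<alpha> / (real K * (1 - \<alpha>))" using Kp a by (simp add: field_simps)
  have e2: "(1 - \<alpha> / real K) / (1 - \<alpha>) = (real K - \<alpha>) / (real K * (1 - \<alpha>))" using Kp a by (simp add: field_simps)
  have lt: "(real K - \<alpha>) / (real K * (1 - \<alpha>)) < - \<alpha> / (real K * (1 - \<alpha>))"
    using Kp a by (intro divide_strict_right_mono_neg) (auto simp: mult_pos_neg)
  have R: "range (\<lambda>g. qRL K \<alpha> g k) = {(real K - \<alpha>) / (real K * (1 - \<alpha>)) <..< - \<alpha> / (real K * (1 - \<alpha>))}"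
    if "k < K" for k
    using range_qRL[OF K2 that, of \<alpha>] image_aff_neg[of \<alpha> "\<alpha> / real K"] a e1 e2 by simp
  have neg: "real K * (1 - \<alpha>) < 0" using Kp a by (simp add: mult_pos_neg)
  have "\<alpha> * 1 \<le> \<alpha> * (real K - 1)" using a K2 by (intro mult_left_mono) auto
  then have "real K - \<alpha> \<ge> 0" using aK by linarith
  then have l0: "(real K - \<alpha>) / (real K * (1 - \<alpha>)) \<le> 0" using neg by (simp add: divide_nonneg_neg)
  have "- \<alpha> \<le> real K * (1 - \<alpha>)" using aK by (simp add: algebra_simps)
  then have h1: "1 \<le> - \<alpha> / (real K * (1 - \<alpha>))" by (subst neg_le_divide_eq[OF neg]) simp
  show ?thesis using R lt l0 h1 by auto
qed

lemma B2_single: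
  assumes "K \<ge> 2" "\<alpha> \<noteq> 1" shows "(\<Sum>k<K. qRL K \<alpha> g k) = 1"
proof -
  have Kp: "K > 0" using assms by simp
  have "(\<Sum>k<K. qRL K \<alpha> g k) = ((\<Sum>k<K. qL K g k) - real K * (\<alpha> / real K)) / (1 - \<alpha>)"
    unfolding qRL_def by (simp add: sum_divide_distrib[symmetric] sum_subtractf)
  also have "\<dots> = (1 - \<alpha>) / (1 - \<alpha>)" using qL_sum[OF Kp] Kp by simp
  also have "\<dots> = 1" using assms by simp
  finally show ?thesis .
qed

lemma smooth_pre_iff: "p \<in> smooth_pre K \<alpha> \<longleftrightarrow> (\<forall>k<K. 0 \<le> smooth K \<alpha> (p k)) \<and> (\<Sum>k<K. smooth K \<alpha> (p k)) = 1"
  by (simp add: smooth_pre_def prob_simplex_def)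

lemma B3_single:
  assumes "K \<ge> 2" "\<alpha> \<noteq> 1" "p \<in> smooth_pre K \<alpha>" "q \<in> smooth_pre K \<alpha>"
  shows "DSKL K \<alpha> p q \<ge> 0 \<and> (DSKL K \<alpha> p q = 0 \<longleftrightarrow> (\<forall>k<K. p k = q k))"
proof -
  have P: "\<forall>k<K. 0 \<le> smooth K \<alpha> (p k)" "(\<Sum>k<K. smooth K \<alpha> (p k)) = 1"
    and Q: "\<forall>k<K. 0 \<le> smooth K \<alpha> (q k)" "(\<Sum>k<K. smooth K \<alpha> (q k)) = 1"
    using assms(3,4) by (auto simp: smooth_pre_iff)
  note g = gibbs[of K "\<lambda>k. smooth K \<alpha> (p k)" "\<lambda>k. smooth K \<alpha> (q k)"]
  show ?thesis unfolding DSKL_def using g P Q smooth_inj[OF assms(2)] by auto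
qed

lemma B3b_single: "DSKL K 1 p q = 0"
  unfolding DSKL_def smooth_def by (simp add: skl_same)

lemma smooth_flip:
  assumes "K \<ge> 2"
  shows "smooth K (real K - (real K - 1) * \<alpha>) ((1 - x) / (real K - 1)) = smooth K \<alpha> x"
proof -
  have "real K - 1 \<noteq> 0" "real K \<noteq> 0" using assms by auto
  then show ?thesis unfolding smooth_def by (simp add: field_simps)
qed

lemma B7_single:
  fixes \<alpha> :: real
  assumes K2: "K \<ge> 2" and a: "1 < \<alpha> \<and> \<alpha> \<le> real K / (real K - 1)" and p: "p \<in> smooth_pre K \<alpha>"
  shows "DSKL K \<alpha> p q = DSKL K (real K - (real K - 1) * \<alpha>)
                (\<lambda>k. (1 - p k) / (real K - 1)) (\<lambda>k. (1 - q k) / (real K - 1))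
        \<and> DSKL K \<alpha> p (qRL K \<alpha> g) = DSKL K (real K - (real K - 1) * \<alpha>)
                (\<lambda>k. (1 - p k) / (real K - 1)) (qRL K (real K - (real K - 1) * \<alpha>) g)
        \<and> 0 \<le> real K - (real K - 1) * \<alpha> \<and> real K - (real K - 1) * \<alpha> < 1
        \<and> (\<lambda>k. (1 - p k) / (real K - 1)) \<in> smooth_pre K (real K - (real K - 1) * \<alpha>)"
proof -
  have K1: "real K - 1 > 0" using K2 by simp
  have aK: "\<alpha> * (real K - 1) \<le> real K" using a K1 by (simp add: le_divide_eq)
  have b0: "0 \<le> real K - (real K - 1) * \<alpha>" using aK by (simp add: algebra_simps)
  have "(real K - 1) * 1 < (real K - 1) * \<alpha>" using a K1 by (intro mult_strict_left_mono) auto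
  then have b1: "real K - (real K - 1) * \<alpha> < 1" by simp
  have bn: "real K - (real K - 1) * \<alpha> \<noteq> 1" using b1 by simp
  have an: "\<alpha> \<noteq> 1" using a by simp
  note sf = smooth_flip[OF K2]
  show ?thesis
    using b0 b1 p unfolding DSKL_def smooth_pre_iff
    by (simp only: sf smooth_qRL[OF an] smooth_qRL[OF bn]) simp
qed

lemma sum2: "(\<Sum>k<(2::nat). f k) = f 0 + f 1"
  by (simp add: numeral_2_eq_2)

lemma qL2_neg: "qL 2 (\<lambda>k. - g k) 0 = qL 2 g 1" "qL 2 (\<lambda>k. - g k) 1 = qL 2 g 0"
proof -
  have "exp (- a) / (exp (- a) + exp (- b)) = exp b / (exp a + exp b)" for a b :: real
  proof -
    have "exp (- a) * (exp a + exp b) = exp b * (exp (- a) + exp (- b))"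
      by (simp add: algebra_simps flip: exp_add)
    moreover have "exp (- a) + exp (- b) > 0" "exp a + exp b > 0" by (auto intro: add_pos_pos)
    ultimately show ?thesis by (simp add: divide_simps)
  qed
  note aux = this
  show "qL 2 (\<lambda>k. - g k) 0 = qL 2 g 1" unfolding qL_def sum2 using aux[of "g 0" "g 1"] by simp
  show "qL 2 (\<lambda>k. - g k) 1 = qL 2 g 0" unfolding qL_def sum2 using aux[of "g 1" "g 0"]
    by (simp add: add.commute)
qed

lemma qL2_sum: "qL 2 g 0 + qL 2 g 1 = 1"
  using qL_sum[of 2 g] by (simp add: sum2)

lemma smooth2_flip: "smooth 2 (2 - \<alpha>) (1 - x) = smooth 2 \<alpha> x"
  unfolding smooth_def by (simp add: field_simps)

lemma B8_single:
  fixes \<alpha> :: real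
  assumes a: "1 < \<alpha> \<and> \<alpha> \<le> 2" and p: "p \<in> smooth_pre 2 \<alpha>"
  shows "DSKL 2 \<alpha> p (qL 2 g) = DSKL 2 (2 - \<alpha>) (\<lambda>k. 1 - p k) (qL 2 (\<lambda>k. - g k))
          \<and> DSKL 2 (2 - \<alpha>) (\<lambda>k. 1 - p k) (qL 2 (\<lambda>k. - g k)) = DSKL 2 (2 - \<alpha>) p (qL 2 g)
          \<and> DSKL 2 \<alpha> p (qRL 2 \<alpha> g) = DSKL 2 (2 - \<alpha>) (\<lambda>k. 1 - p k) (qRL 2 (2 - \<alpha>) g)
          \<and> DSKL 2 (2 - \<alpha>) (\<lambda>k. 1 - p k) (qRL 2 (2 - \<alpha>) g) = DSKL 2 (2 - \<alpha>) p (qRL 2 (2 - \<alpha>) (\<lambda>k. - g k))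
          \<and> 0 \<le> 2 - \<alpha> \<and> 2 - \<alpha> < 1
          \<and> (\<lambda>k. 1 - p k) \<in> smooth_pre 2 (2 - \<alpha>)"
proof -
  have an: "\<alpha> \<noteq> 1" and bn: "2 - \<alpha> \<noteq> 1" using a by auto
  have "smooth 2 \<alpha> (p 0) + smooth 2 \<alpha> (p 1) = 1" using p by (simp add: smooth_pre_iff sum2)
  then have "(1 - \<alpha>) * (p 0 + p 1 - 1) = 0" unfolding smooth_def by (simp add: algebra_simps)
  then have p01: "p 0 + p 1 = 1" using an by simp
  have p0: "1 - p 0 = p 1" and p1: "1 - p 1 = p 0" using p01 by auto
  have n0: "qL 2 (\<lambda>k. - g k) 0 = 1 - qL 2 g 0" and n1: "qL 2 (\<lambda>k. - g k) 1 = 1 - qL 2 g 1"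
    using qL2_neg qL2_sum[of g] by (auto simp: algebra_simps)
  have m0: "qL 2 (\<lambda>k. - g k) 0 = qL 2 g 1" and m1: "qL 2 (\<lambda>k. - g k) 1 = qL 2 g 0"
    using qL2_neg by auto
  have E1: "DSKL 2 \<alpha> p (qL 2 g) = DSKL 2 (2 - \<alpha>) (\<lambda>k. 1 - p k) (qL 2 (\<lambda>k. - g k))"
    unfolding DSKL_def sum2 n0 n1 smooth2_flip by simp
  have E2: "DSKL 2 (2 - \<alpha>) (\<lambda>k. 1 - p k) (qL 2 (\<lambda>k. - g k)) = DSKL 2 (2 - \<alpha>) p (qL 2 g)"
    unfolding DSKL_def sum2 m0 m1 p0 p1 by (simp add: add.commute)
  have E3: "DSKL 2 \<alpha> p (qRL 2 \<alpha> g) = DSKL 2 (2 - \<alpha>) (\<lambda>k. 1 - p k) (qRL 2 (2 - \<alpha>) g)"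
    unfolding DSKL_def smooth_qRL[OF an] smooth_qRL[OF bn] smooth2_flip by simp
  have E4: "DSKL 2 (2 - \<alpha>) (\<lambda>k. 1 - p k) (qRL 2 (2 - \<alpha>) g) = DSKL 2 (2 - \<alpha>) p (qRL 2 (2 - \<alpha>) (\<lambda>k. - g k))"
    unfolding DSKL_def smooth_qRL[OF bn] sum2 m0 m1 p0 p1 by (simp add: add.commute)
  have M: "(\<lambda>k. 1 - p k) \<in> smooth_pre 2 (2 - \<alpha>)"
    using p unfolding smooth_pre_iff smooth2_flip by simp
  show ?thesis using E1 E2 E3 E4 M a by simp
qed

lemma skl_fin:
  assumes "c \<ge> 0" "d \<ge> 0" "skl_term c d \<noteq> \<infinity>"
  shows "skl_term c d = ereal (c * ln (c / d)) \<and> (c = 0 \<or> d > 0)"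
  using assms by (auto simp: skl_term_def split: if_splits)

lemma logsum_term:
  fixes x u A B :: real
  assumes "x \<ge> 0" "u \<ge> 0" "x = 0 \<or> u > 0" "A > 0" "B > 0"
  shows "x * ln (A / B) + x - u * A / B \<le> x * ln (x / u)"
proof (cases "x = 0")
  case True then show ?thesis using assms by simp
next
  case False
  then have x: "x > 0" and u: "u > 0" using assms by auto
  have z: "u * A / (x * B) > 0" using x u assms by simp
  have l: "ln (u * A / (x * B)) \<le> u * A / (x * B) - 1" by (rule ln_le_minus_one[OF z])
  have eq: "ln (x / u) = ln (A / B) - ln (u * A / (x * B))"
    using x u assms by (simp add: ln_div ln_mult)
  have "x * ln (u * A / (x * B)) \<le> x * (u * A / (x * B) - 1)" using l x by (intro mult_left_mono) auto
  also have "\<dots> = u * A / B - x" using x assms by (simp add: field_simps)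
  finally show ?thesis unfolding eq by (simp add: algebra_simps)
qed

lemma logsum:
  fixes x y u v :: real
  assumes "x \<ge> 0" "y \<ge> 0" "u \<ge> 0" "v \<ge> 0" "x = 0 \<or> u > 0" "y = 0 \<or> v > 0" "x + y > 0"
  shows "(x + y) * ln ((x + y) / (u + v)) \<le> x * ln (x / u) + y * ln (y / v)"
proof -
  have B: "u + v > 0" using assms by auto
  have 1: "x * ln ((x + y) / (u + v)) + x - u * (x + y) / (u + v) \<le> x * ln (x / u)"
    using assms B by (intro logsum_term) auto
  have 2: "y * ln ((x + y) / (u + v)) + y - v * (x + y) / (u + v) \<le> y * ln (y / v)"
    using assms B by (intro logsum_term) auto
  have "u * (x + y) / (u + v) + v * (x + y) / (u + v) = ((u + v) * (x + y)) / (u + v)"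
    by (simp add: add_divide_distrib distrib_right)
  also have "\<dots> = x + y" using B by simp
  finally have "u * (x + y) / (u + v) + v * (x + y) / (u + v) = x + y" .
  then show ?thesis using 1 2 by (simp add: algebra_simps)
qed

lemma mix_term:
  fixes r a1 a2 b1 b2 :: real
  assumes r: "0 < r" "r < 1" and nn: "a1 \<ge> 0" "a2 \<ge> 0" "b1 \<ge> 0" "b2 \<ge> 0"
    and f1: "a1 = 0 \<or> b1 > 0" and f2: "a2 = 0 \<or> b2 > 0"
  shows "skl_term (r * a1 + (1 - r) * a2) (r * b1 + (1 - r) * b2)
           \<le> ereal (r * (a1 * ln (a1 / b1)) + (1 - r) * (a2 * ln (a2 / b2)))"
proof (cases "r * a1 + (1 - r) * a2 = 0")
  case True
  have "r * a1 \<ge> 0" "(1 - r) * a2 \<ge> 0" using r nn by auto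
  then have "r * a1 = 0" "(1 - r) * a2 = 0" using True by linarith+
  then have "a1 = 0" "a2 = 0" using r by auto
  then show ?thesis using True by (simp add: skl_term_def)
next
  case False
  have x: "r * a1 \<ge> 0" "(1 - r) * a2 \<ge> 0" "r * b1 \<ge> 0" "(1 - r) * b2 \<ge> 0" using r nn by auto
  have pos: "r * a1 + (1 - r) * a2 > 0" using False x by linarith
  have fx1: "r * a1 = 0 \<or> r * b1 > 0" using f1 r by auto
  have fx2: "(1 - r) * a2 = 0 \<or> (1 - r) * b2 > 0" using f2 r by auto
  have bpos: "r * b1 + (1 - r) * b2 > 0" using fx1 fx2 pos x by (auto simp: add_pos_nonneg add_nonneg_pos)
  have L: "(r * a1 + (1 - r) * a2) * ln ((r * a1 + (1 - r) * a2) / (r * b1 + (1 - r) * b2))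
       \<le> (r * a1) * ln ((r * a1) / (r * b1)) + ((1 - r) * a2) * ln (((1 - r) * a2) / ((1 - r) * b2))"
    using x fx1 fx2 pos by (intro logsum) auto
  have c1: "(r * a1) / (r * b1) = a1 / b1" "((1 - r) * a2) / ((1 - r) * b2) = a2 / b2" using r by auto
  show ?thesis using L unfolding skl_real[OF bpos] c1 by (simp add: mult.assoc)
qed

lemma sum_skl_lower:
  fixes K :: nat and P :: "nat \<Rightarrow> real"
  assumes "\<forall>k<K. 0 \<le> P k" "\<forall>k<K. 0 \<le> Q k"
  shows "ereal (\<Sum>k<K. P k - Q k) \<le> (\<Sum>k<K. skl_term (P k) (Q k))"
proof -
  have "(\<Sum>k<K. ereal (P k - Q k)) \<le> (\<Sum>k<K. skl_term (P k) (Q k))"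
    by (rule sum_mono) (use assms skl_ge in auto)
  then show ?thesis by simp
qed

lemma sum_skl_fin:
  fixes K :: nat and P :: "nat \<Rightarrow> real"
  assumes "\<forall>k<K. 0 \<le> P k" "\<forall>k<K. 0 \<le> Q k" "(\<Sum>k<K. skl_term (P k) (Q k)) \<noteq> \<infinity>"
  shows "(\<Sum>k<K. skl_term (P k) (Q k)) = ereal (\<Sum>k<K. P k * ln (P k / Q k))"
    and "\<forall>k<K. P k = 0 \<or> Q k > 0"
proof -
  have ni: "\<forall>k<K. skl_term (P k) (Q k) \<noteq> \<infinity>"
  proof (intro allI impI notI)
    fix k assume k: "k < K" and inf: "skl_term (P k) (Q k) = \<infinity>"
    have "(\<Sum>k<K. skl_term (P k) (Q k)) = \<infinity>"
      by (subst sum_Pinfty) (use k inf in auto)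
    then show False using assms(3) by simp
  qed
  then have e: "\<forall>k<K. skl_term (P k) (Q k) = ereal (P k * ln (P k / Q k)) \<and> (P k = 0 \<or> Q k > 0)"
    using skl_fin assms(1,2) by blast
  then show "\<forall>k<K. P k = 0 \<or> Q k > 0" by blast
  have "(\<Sum>k<K. skl_term (P k) (Q k)) = (\<Sum>k<K. ereal (P k * ln (P k / Q k)))"
    using e by (intro sum.cong) auto
  then show "(\<Sum>k<K. skl_term (P k) (Q k)) = ereal (\<Sum>k<K. P k * ln (P k / Q k))" by simp
qed

lemma B4_single:
  fixes \<alpha> r :: real
  assumes p1: "p1 \<in> smooth_pre K \<alpha>" and p2: "p2 \<in> smooth_pre K \<alpha>"
    and q1: "q1 \<in> smooth_pre K \<alpha>" and q2: "q2 \<in> smooth_pre K \<alpha>" and r: "0 \<le> r" "r \<le> 1"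
  shows "DSKL K \<alpha> (\<lambda>k. r * p1 k + (1 - r) * p2 k) (\<lambda>k. r * q1 k + (1 - r) * q2 k)
            \<le> ereal r * DSKL K \<alpha> p1 q1 + ereal (1 - r) * DSKL K \<alpha> p2 q2"
proof -
  define a1 where "a1 k = smooth K \<alpha> (p1 k)" for k
  define a2 where "a2 k = smooth K \<alpha> (p2 k)" for k
  define b1 where "b1 k = smooth K \<alpha> (q1 k)" for k
  define b2 where "b2 k = smooth K \<alpha> (q2 k)" for k
  have nn: "\<forall>k<K. 0 \<le> a1 k" "\<forall>k<K. 0 \<le> a2 k" "\<forall>k<K. 0 \<le> b1 k" "\<forall>k<K. 0 \<le> b2 k"
    using p1 p2 q1 q2 unfolding a1_def a2_def b1_def b2_def smooth_pre_iff by auto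
  have mix: "smooth K \<alpha> (r * x + (1 - r) * y) = r * smooth K \<alpha> x + (1 - r) * smooth K \<alpha> y" for x y
    by (cases "K = 0") (simp_all add: smooth_def field_simps)
  have D: "DSKL K \<alpha> (\<lambda>k. r * p1 k + (1 - r) * p2 k) (\<lambda>k. r * q1 k + (1 - r) * q2 k)
     = (\<Sum>k<K. skl_term (r * a1 k + (1 - r) * a2 k) (r * b1 k + (1 - r) * b2 k))"
    unfolding DSKL_def mix a1_def a2_def b1_def b2_def ..
  have D1: "DSKL K \<alpha> p1 q1 = (\<Sum>k<K. skl_term (a1 k) (b1 k))" unfolding DSKL_def a1_def b1_def ..
  have D2: "DSKL K \<alpha> p2 q2 = (\<Sum>k<K. skl_term (a2 k) (b2 k))" unfolding DSKL_def a2_def b2_def ..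
  have m1: "(\<Sum>k<K. skl_term (a1 k) (b1 k)) \<noteq> -\<infinity>"
    using sum_skl_lower[of K a1 b1] nn by auto
  have m2: "(\<Sum>k<K. skl_term (a2 k) (b2 k)) \<noteq> -\<infinity>"
    using sum_skl_lower[of K a2 b2] nn by auto
  consider "r = 0" | "r = 1" | "0 < r \<and> r < 1" using r by linarith
  then show ?thesis
  proof cases
    case 1
    then show ?thesis by (simp add: zero_ereal_def[symmetric] one_ereal_def[symmetric])
  next
    case 2
    then show ?thesis by (simp add: zero_ereal_def[symmetric] one_ereal_def[symmetric])
  next
    case 3
    show ?thesis
    proof (cases "(\<Sum>k<K. skl_term (a1 k) (b1 k)) = \<infinity> \<or> (\<Sum>k<K. skl_term (a2 k) (b2 k)) = \<infinity>")
      case True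
      then have R: "ereal r * DSKL K \<alpha> p1 q1 + ereal (1 - r) * DSKL K \<alpha> p2 q2 = \<infinity>"
        using 3 m1 m2 unfolding D1 D2 by auto
      show ?thesis unfolding R by simp
    next
      case False
      note F1 = sum_skl_fin[of K a1 b1] and F2 = sum_skl_fin[of K a2 b2]
      have "(\<Sum>k<K. skl_term (r * a1 k + (1 - r) * a2 k) (r * b1 k + (1 - r) * b2 k))
           \<le> (\<Sum>k<K. ereal (r * (a1 k * ln (a1 k / b1 k)) + (1 - r) * (a2 k * ln (a2 k / b2 k))))"
      proof (rule sum_mono)
        fix k assume "k \<in> {..<K}"
        then show "skl_term (r * a1 k + (1 - r) * a2 k) (r * b1 k + (1 - r) * b2 k)
           \<le> ereal (r * (a1 k * ln (a1 k / b1 k)) + (1 - r) * (a2 k * ln (a2 k / b2 k)))"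
          using 3 nn F1(2) F2(2) False by (intro mix_term) auto
      qed
      also have "\<dots> = ereal r * ereal (\<Sum>k<K. a1 k * ln (a1 k / b1 k))
                       + ereal (1 - r) * ereal (\<Sum>k<K. a2 k * ln (a2 k / b2 k))"
        by (simp add: sum.distrib sum_distrib_left)
      finally show ?thesis unfolding D D1 D2 using F1(1) F2(1) False nn by simp
    qed
  qed
qed

lemma kl_tendsto:
  fixes K :: nat and P :: "nat \<Rightarrow> real"
  assumes P: "\<forall>k<K. 0 \<le> P k" and L: "\<forall>k<K. ((\<lambda>t. Q t k) \<longlongrightarrow> P k) F"
    and Q: "\<forall>t. \<forall>k<K. Q t k > 0"
  shows "((\<lambda>t. \<Sum>k<K. skl_term (P k) (Q t k)) \<longlongrightarrow> 0) F"
proof -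
  have eq: "(\<lambda>t. \<Sum>k<K. skl_term (P k) (Q t k)) = (\<lambda>t. ereal (\<Sum>k<K. P k * ln (P k / Q t k)))"
  proof
    fix t
    have "(\<Sum>k<K. skl_term (P k) (Q t k)) = (\<Sum>k<K. ereal (P k * ln (P k / Q t k)))"
      using Q by (intro sum.cong) (auto simp: skl_real)
    then show "(\<Sum>k<K. skl_term (P k) (Q t k)) = ereal (\<Sum>k<K. P k * ln (P k / Q t k))" by simp
  qed
  have "((\<lambda>t. \<Sum>k<K. P k * ln (P k / Q t k)) \<longlongrightarrow> 0) F"
  proof (rule tendsto_null_sum)
    fix k assume k: "k \<in> {..<K}"
    show "((\<lambda>t. P k * ln (P k / Q t k)) \<longlongrightarrow> 0) F"
    proof (cases "P k = 0")
      case True then show ?thesis by simp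
    next
      case False
      have "((\<lambda>t. P k * ln (P k / Q t k)) \<longlongrightarrow> P k * ln (P k / P k)) F"
        using L k False by (intro tendsto_intros) auto
      then show ?thesis using False by simp
    qed
  qed
  then have "((\<lambda>t. ereal (\<Sum>k<K. P k * ln (P k / Q t k))) \<longlongrightarrow> ereal 0) F"
    by (rule tendsto_ereal)
  then show ?thesis unfolding eq by (simp add: zero_ereal_def)
qed

lemma inf_zero:
  fixes f :: "'b \<Rightarrow> ereal"
  assumes "\<forall>h\<in>A. 0 \<le> f h" "\<forall>t. u t \<in> A" "((\<lambda>t. f (u t)) \<longlongrightarrow> 0) F" "F \<noteq> bot"
  shows "(INF h\<in>A. f h) = 0"
proof (rule antisym)
  show "0 \<le> (INF h\<in>A. f h)" using assms(1) by (auto intro: INF_greatest)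
  have "eventually (\<lambda>t. (INF h\<in>A. f h) \<le> f (u t)) F"
    using assms(2) by (auto intro: INF_lower always_eventually)
  then show "(INF h\<in>A. f h) \<le> 0"
    using tendsto_le[OF assms(4) assms(3) tendsto_const] by blast
qed

lemma qL_u:
  assumes "k < K"
  shows "qL K (\<lambda>k. if k = 0 then t else 0) k = (if k = 0 then exp t else 1) / (exp t + (real K - 1))"
proof -
  have "(\<Sum>l<K. exp (if l = 0 then t else 0)) = (\<Sum>l<K. if l = 0 then exp t else 1)"
    by (intro sum.cong) auto
  also have "\<dots> = exp t + (real K - 1)" using sum_if_one[of 0 K "exp t" 1] assms by simp
  finally show ?thesis unfolding qL_def by simp
qed

lemma lim_top:
  fixes c :: real assumes "c \<ge> 0"
  shows "((\<lambda>t. 1 / (exp t + c)) \<longlongrightarrow> 0) at_top" and "((\<lambda>t. exp t / (exp t + c)) \<longlongrightarrow> 1) at_top"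
proof -
  have "filterlim (\<lambda>t. c + exp t) at_top at_top"
    by (rule filterlim_tendsto_add_at_top[OF tendsto_const exp_at_top])
  then have "filterlim (\<lambda>t. exp t + c) at_top at_top" by (simp add: add.commute)
  then have "((\<lambda>t. inverse (exp t + c)) \<longlongrightarrow> 0) at_top"
    by (rule tendsto_inverse_0_at_top)
  then show 1: "((\<lambda>t. 1 / (exp t + c)) \<longlongrightarrow> 0) at_top" by (simp add: inverse_eq_divide)
  have "((\<lambda>t. 1 - c * (1 / (exp t + c))) \<longlongrightarrow> 1 - c * 0) at_top"
    by (intro tendsto_intros 1)
  moreover have "exp t / (exp t + c) = 1 - c * (1 / (exp t + c))" for t
  proof -
    have "exp t + c > 0" using assms by (intro add_pos_nonneg) auto
    then show ?thesis by (simp add: field_simps)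
  qed
  ultimately show "((\<lambda>t. exp t / (exp t + c)) \<longlongrightarrow> 1) at_top" by simp
qed

lemma lim_bot:
  fixes c :: real assumes "c > 0"
  shows "((\<lambda>t. 1 / (exp t + c)) \<longlongrightarrow> 1 / c) at_bot" and "((\<lambda>t. exp t / (exp t + c)) \<longlongrightarrow> 0) at_bot"
proof -
  have e: "(exp \<longlongrightarrow> (0::real)) at_bot" by (rule exp_at_bot)
  have "((\<lambda>t. 1 / (exp t + c)) \<longlongrightarrow> 1 / (0 + c)) at_bot"
    using assms by (intro tendsto_intros e) auto
  then show "((\<lambda>t. 1 / (exp t + c)) \<longlongrightarrow> 1 / c) at_bot" by simp
  have "((\<lambda>t. exp t / (exp t + c)) \<longlongrightarrow> 0 / (0 + c)) at_bot"
    using assms by (intro tendsto_intros e) auto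
  then show "((\<lambda>t. exp t / (exp t + c)) \<longlongrightarrow> 0) at_bot" by simp
qed

lemma smooth_nonneg:
  assumes K2: "K \<ge> 2" and a: "0 \<le> \<alpha>" "\<alpha> \<le> real K / (real K - 1)" and x: "0 \<le> x" "x \<le> 1"
  shows "0 \<le> smooth K \<alpha> x"
proof (cases "\<alpha> \<le> 1")
  case True then show ?thesis using x a unfolding smooth_def by simp
next
  case False
  have K1: "real K - 1 > 0" using K2 by simp
  have aK: "\<alpha> * (real K - 1) \<le> real K" using a K1 by (simp add: le_divide_eq)
  have "(1 - \<alpha>) * 1 + \<alpha> / real K \<ge> 0"
  proof -
    have "real K - real K * \<alpha> + \<alpha> \<ge> 0" using aK by (simp add: algebra_simps)
    then have "(real K - real K * \<alpha> + \<alpha>) / real K \<ge> 0" using K2 by simp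
    moreover have "(real K - real K * \<alpha> + \<alpha>) / real K = (1 - \<alpha>) * 1 + \<alpha> / real K" using K2 by (simp add: field_simps)
    ultimately show ?thesis by simp
  qed
  moreover have "(1 - \<alpha>) * 1 \<le> (1 - \<alpha>) * x" using False x by (intro mult_left_mono_neg) auto
  ultimately show ?thesis unfolding smooth_def by simp
qed

lemma smooth_pos:
  assumes K2: "K \<ge> 2" and a: "0 \<le> \<alpha>" "\<alpha> \<le> real K / (real K - 1)" and x: "0 < x" "x < 1"
  shows "0 < smooth K \<alpha> x"
proof (cases "\<alpha> < 1")
  case True then show ?thesis using x a unfolding smooth_def by (simp add: add_pos_nonneg)
next
  case False
  show ?thesis
  proof (cases "\<alpha> = 1")
    case True then show ?thesis using K2 unfolding smooth_def by simp
  next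
    case False2: False
    have "0 \<le> smooth K \<alpha> 1" using smooth_nonneg[OF K2 a] by simp
    moreover have "(1 - \<alpha>) * 1 < (1 - \<alpha>) * x" using False False2 x by (intro mult_strict_left_mono_neg) auto
    ultimately show ?thesis unfolding smooth_def by simp
  qed
qed

lemma sum_e1: "(K::nat) > 0 \<Longrightarrow> (\<Sum>k<K. (if k = 0 then 1 else 0 :: real)) = 1"
  by (subst sum.delta) auto

lemma smooth_tendsto: "((\<lambda>t. X t) \<longlongrightarrow> x) F \<Longrightarrow> ((\<lambda>t. smooth K \<alpha> (X t)) \<longlongrightarrow> smooth K \<alpha> x) F"
  unfolding smooth_def by (intro tendsto_intros)

lemma KK1: "K \<ge> 2 \<Longrightarrow> 1 \<le> real K / (real K - 1)"
  by (simp add: le_divide_eq)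

lemma B5_single:
  fixes \<alpha> :: real
  assumes K2: "K \<ge> 2" and a: "(0 \<le> \<alpha> \<and> \<alpha> < 1) \<or> (1 < \<alpha> \<and> \<alpha> \<le> real K / (real K - 1))"
  shows "\<not> (\<exists>g. g (K - 1) = 0 \<and>
             DSKL K \<alpha> (\<lambda>k. if k = 0 then 1 else 0) (qL K g)
               = (INF h\<in>{h. h (K - 1) = 0}. DSKL K \<alpha> (\<lambda>k. if k = 0 then 1 else 0) (qL K h)))
      \<and> ((\<lambda>t. DSKL K \<alpha> (\<lambda>k. if k = 0 then 1 else 0) (qL K (\<lambda>k. if k = 0 then t else 0)))
           \<longlongrightarrow> (INF h\<in>{h. h (K - 1) = 0}. DSKL K \<alpha> (\<lambda>k. if k = 0 then 1 else 0) (qL K h))) at_top"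
proof -
  define P where "P = (\<lambda>k::nat. smooth K \<alpha> (if k = 0 then 1 else 0))"
  define f where "f = (\<lambda>h. DSKL K \<alpha> (\<lambda>k. if k = 0 then 1 else 0) (qL K h))"
  define u where "u = (\<lambda>t::real. (\<lambda>k::nat. if k = 0 then t else 0))"
  define A where "A = {h::nat\<Rightarrow>real. h (K - 1) = 0}"
  have f_eq: "f h = (\<Sum>k<K. skl_term (P k) (smooth K \<alpha> (qL K h k)))" for h
    unfolding f_def DSKL_def P_def ..
  have Kp: "K > 0" using K2 by simp
  have a0: "0 \<le> \<alpha>" and aK: "\<alpha> \<le> real K / (real K - 1)" and an: "\<alpha> \<noteq> 1"
    using a KK1[OF K2] by auto
  have Pnn: "\<forall>k<K. 0 \<le> P k" unfolding P_def using smooth_nonneg[OF K2 a0 aK] by simp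
  have Psum: "(\<Sum>k<K. P k) = 1" unfolding P_def using sum_smooth[OF Kp] sum_e1[OF Kp] by simp
  have Qpos: "\<forall>h. \<forall>k<K. 0 < smooth K \<alpha> (qL K h k)"
    using smooth_pos[OF K2 a0 aK] qL_pos[OF Kp] qL_less1[OF K2] by simp
  have Qsum: "(\<Sum>k<K. smooth K \<alpha> (qL K h k)) = 1" for h
    using sum_smooth[OF Kp] qL_sum[OF Kp] by simp
  have fnn: "\<forall>h. 0 \<le> f h"
    using gibbs(1)[of K P] Pnn Qpos Psum Qsum unfolding f_eq by (simp add: less_imp_le)
  have lim1: "((\<lambda>t. smooth K \<alpha> (qL K (u t) k)) \<longlongrightarrow> P k) at_top" if k: "k < K" for k
  proof (cases "k = 0")
    case True
    have "((\<lambda>t. smooth K \<alpha> (exp t / (exp t + (real K - 1)))) \<longlongrightarrow> smooth K \<alpha> 1) at_top"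
      using K2 by (intro smooth_tendsto lim_top) simp
    then show ?thesis unfolding u_def P_def using qL_u[OF k] True by simp
  next
    case False
    have "((\<lambda>t. smooth K \<alpha> (1 / (exp t + (real K - 1)))) \<longlongrightarrow> smooth K \<alpha> 0) at_top"
      using K2 by (intro smooth_tendsto lim_top) simp
    then show ?thesis unfolding u_def P_def using qL_u[OF k] False by simp
  qed
  have lim: "((\<lambda>t. f (u t)) \<longlongrightarrow> 0) at_top"
    unfolding f_eq using Pnn lim1 Qpos by (intro kl_tendsto) auto
  have uA: "\<forall>t. u t \<in> A" unfolding u_def A_def using K2 by auto
  have INF0: "(INF h\<in>A. f h) = 0"
    using fnn uA lim by (intro inf_zero) auto
  have na: "\<not> (\<exists>g. g (K - 1) = 0 \<and> f g = (INF h\<in>A. f h))"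
  proof
    assume "\<exists>g. g (K - 1) = 0 \<and> f g = (INF h\<in>A. f h)"
    then obtain g where "f g = 0" using INF0 by auto
    then have "\<forall>k<K. P k = smooth K \<alpha> (qL K g k)"
      using gibbs(2)[of K P "\<lambda>k. smooth K \<alpha> (qL K g k)"] Pnn Qpos Psum Qsum unfolding f_eq
      by (simp add: less_imp_le)
    then have "P 0 = smooth K \<alpha> (qL K g 0)" using Kp by auto
    then have "qL K g 0 = 1" unfolding P_def using smooth_inj[OF an] by simp
    then show False using qL_less1[OF K2 Kp, of g] by simp
  qed
  have "\<not> (\<exists>g. g (K - 1) = 0 \<and> f g = (INF h\<in>A. f h)) \<and> ((\<lambda>t. f (u t)) \<longlongrightarrow> (INF h\<in>A. f h)) at_top"
    using na lim INF0 by simp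
  then show ?thesis unfolding f_def u_def A_def .
qed

lemma B6b_single:
  fixes \<alpha> :: real and g :: "nat \<Rightarrow> real"
  assumes K2: "K \<ge> 2" and a: "(0 < \<alpha> \<and> \<alpha> < 1) \<or> (1 < \<alpha> \<and> \<alpha> < real K / (real K - 1))"
    and g0: "g (K - 1) = 0"
  shows "DSKL K \<alpha> (\<lambda>k. if k = 0 then 1 else 0) (qRL K \<alpha> g)
             = (INF h\<in>{h. h (K - 1) = 0}. DSKL K \<alpha> (\<lambda>k. if k = 0 then 1 else 0) (qRL K \<alpha> h))
           \<longleftrightarrow> (\<forall>k<K. g k = (if k = 0 then ln (real K / \<alpha> + 1 - real K) else 0))"
proof -
  define P where "P = (\<lambda>k::nat. smooth K \<alpha> (if k = 0 then 1 else 0))"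
  define f where "f = (\<lambda>h. DSKL K \<alpha> (\<lambda>k. if k = 0 then 1 else 0) (qRL K \<alpha> h))"
  define A where "A = {h::nat\<Rightarrow>real. h (K - 1) = 0}"
  define c where "c = real K / \<alpha> + 1 - real K"
  define gs where "gs = (\<lambda>k::nat. if k = 0 then ln c else 0)"
  have Kp: "K > 0" using K2 by simp
  have K1: "real K - 1 > 0" using K2 by simp
  have a0: "0 < \<alpha>" and aK: "\<alpha> < real K / (real K - 1)" and an: "\<alpha> \<noteq> 1"
    using a KK1[OF K2] by auto
  have f_eq: "f h = (\<Sum>k<K. skl_term (P k) (qL K h k))" for h
    unfolding f_def DSKL_def P_def smooth_qRL[OF an] ..
  have Pnn: "\<forall>k<K. 0 \<le> P k" unfolding P_def using smooth_nonneg[OF K2 less_imp_le[OF a0] less_imp_le[OF aK]] by simp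
  have Psum: "(\<Sum>k<K. P k) = 1" unfolding P_def using sum_smooth[OF Kp] sum_e1[OF Kp] by simp
  have Qnn: "\<forall>k<K. 0 \<le> qL K h k" for h using qL_pos[OF Kp] less_imp_le by blast
  have Qsum: "(\<Sum>k<K. qL K h k) = 1" for h using qL_sum[OF Kp] by simp
  have fz: "f h = 0 \<longleftrightarrow> (\<forall>k<K. P k = qL K h k)" for h
    unfolding f_eq using gibbs(2)[of K P "qL K h"] Pnn Qnn Psum Qsum by simp
  have fnn: "\<forall>h. 0 \<le> f h"
    unfolding f_eq using gibbs(1)[of K P] Pnn Qnn Psum Qsum by simp
  have "\<alpha> * (real K - 1) < real K" using aK K1 by (simp add: less_divide_eq)
  then have "real K - 1 < real K / \<alpha>" using a0 by (simp add: less_divide_eq mult.commute)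
  then have cpos: "c > 0" unfolding c_def by simp
  have Sgs: "(\<Sum>l<K. exp (gs l)) = real K / \<alpha>"
  proof -
    have "(\<Sum>l<K. exp (gs l)) = (\<Sum>l<K. if l = 0 then c else 1)"
      unfolding gs_def using cpos by (intro sum.cong) auto
    also have "\<dots> = c + (real K - 1)" using sum_if_one[of 0 K c 1] Kp by simp
    finally show ?thesis unfolding c_def by simp
  qed
  have P0: "P 0 = 1 - \<alpha> + \<alpha> / real K" unfolding P_def smooth_def by simp
  have Pk: "P k = \<alpha> / real K" if "k \<noteq> 0" for k unfolding P_def smooth_def using that by simp
  have qgs: "\<forall>k<K. P k = qL K gs k"
  proof (intro allI impI)
    fix k assume k: "k < K"
    show "P k = qL K gs k"
    proof (cases "k = 0")
      case True
      have "qL K gs k = c / (real K / \<alpha>)" unfolding qL_def Sgs using True cpos gs_def by simp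
      also have "\<dots> = 1 - \<alpha> + \<alpha> / real K" unfolding c_def using a0 Kp by (simp add: field_simps)
      finally show ?thesis using P0 True by simp
    next
      case False
      have "qL K gs k = 1 / (real K / \<alpha>)" unfolding qL_def Sgs using False gs_def by simp
      then show ?thesis using Pk[OF False] by simp
    qed
  qed
  have gsA: "gs \<in> A" unfolding gs_def A_def using K2 by auto
  have INF0: "(INF h\<in>A. f h) = 0"
  proof (rule antisym)
    show "0 \<le> (INF h\<in>A. f h)" using fnn by (auto intro: INF_greatest)
    have "(INF h\<in>A. f h) \<le> f gs" using gsA by (rule INF_lower)
    also have "f gs = 0" using fz qgs by simp
    finally show "(INF h\<in>A. f h) \<le> 0" .
  qed
  have main: "(\<forall>k<K. P k = qL K g k) \<longleftrightarrow> (\<forall>k<K. g k = gs k)"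
  proof
    assume h: "\<forall>k<K. g k = gs k"
    have "qL K g k = qL K gs k" if "k < K" for k
    proof -
      have "(\<Sum>l<K. exp (g l)) = (\<Sum>l<K. exp (gs l))" using h by (intro sum.cong) auto
      then show ?thesis unfolding qL_def using h that by simp
    qed
    then show "\<forall>k<K. P k = qL K g k" using qgs by simp
  next
    assume h: "\<forall>k<K. P k = qL K g k"
    define S where "S = (\<Sum>l<K. exp (g l))"
    have Spos: "S > 0" unfolding S_def using Kp by (intro sum_pos) auto
    have "K - 1 < K" "K - 1 \<noteq> 0" using K2 by auto
    then have "\<alpha> / real K = 1 / S" using h Pk[of "K - 1"] g0 unfolding qL_def S_def by simp
    then have S: "S = real K / \<alpha>" using a0 Kp Spos by (simp add: field_simps)
    have ex: "exp (g k) = P k * (real K / \<alpha>)" if "k < K" for k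
      using h that Spos a0 unfolding qL_def S_def[symmetric] S by simp
    show "\<forall>k<K. g k = gs k"
    proof (intro allI impI)
      fix k assume k: "k < K"
      show "g k = gs k"
      proof (cases "k = 0")
        case True
        have "P 0 * (real K / \<alpha>) = c" unfolding P0 c_def using a0 Kp by (simp add: field_simps)
        then have "exp (g k) = c" using ex[OF k] True by simp
        then have "g k = ln c" by (metis ln_exp)
        then show ?thesis unfolding gs_def using True by simp
      next
        case False
        have "exp (g k) = 1" using ex[OF k] Pk[OF False] a0 Kp by simp
        then show ?thesis unfolding gs_def using False by simp
      qed
    qed
  qed
  have "f g = (INF h\<in>A. f h) \<longleftrightarrow> (\<forall>k<K. g k = gs k)" using INF0 fz main by simp
  then show ?thesis unfolding f_def A_def gs_def c_def .
qed

lemma B6c_single: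
  assumes K2: "K \<ge> 2"
  shows "(let \<alpha> = real K / (real K - 1) in
     \<not> (\<exists>g. g (K - 1) = 0 \<and>
             DSKL K \<alpha> (\<lambda>k. if k = 0 then 1 else 0) (qRL K \<alpha> g)
               = (INF h\<in>{h. h (K - 1) = 0}. DSKL K \<alpha> (\<lambda>k. if k = 0 then 1 else 0) (qRL K \<alpha> h)))
      \<and> ((\<lambda>t. DSKL K \<alpha> (\<lambda>k. if k = 0 then 1 else 0) (qRL K \<alpha> (\<lambda>k. if k = 0 then t else 0)))
           \<longlongrightarrow> (INF h\<in>{h. h (K - 1) = 0}. DSKL K \<alpha> (\<lambda>k. if k = 0 then 1 else 0) (qRL K \<alpha> h))) at_bot)"
proof -
  define \<alpha> where "\<alpha> = real K / (real K - 1)"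
  define P where "P = (\<lambda>k::nat. smooth K \<alpha> (if k = 0 then 1 else 0))"
  define f where "f = (\<lambda>h. DSKL K \<alpha> (\<lambda>k. if k = 0 then 1 else 0) (qRL K \<alpha> h))"
  define u where "u = (\<lambda>t::real. (\<lambda>k::nat. if k = 0 then t else 0))"
  define A where "A = {h::nat\<Rightarrow>real. h (K - 1) = 0}"
  have Kp: "K > 0" using K2 by simp
  have K1: "real K - 1 > 0" using K2 by simp
  have an: "\<alpha> \<noteq> 1" unfolding \<alpha>_def using K1 by simp
  have f_eq: "f h = (\<Sum>k<K. skl_term (P k) (qL K h k))" for h
    unfolding f_def DSKL_def P_def smooth_qRL[OF an] ..
  have P0: "P 0 = 0" unfolding P_def smooth_def \<alpha>_def using K1 Kp by (simp add: field_simps)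
  have Pk: "P k = 1 / (real K - 1)" if "k \<noteq> 0" for k
    unfolding P_def smooth_def \<alpha>_def using that K1 Kp by simp
  have Pnn: "\<forall>k<K. 0 \<le> P k" using P0 Pk K1 by (metis less_eq_real_def divide_pos_pos zero_less_one)
  have Psum: "(\<Sum>k<K. P k) = 1" unfolding P_def using sum_smooth[OF Kp] sum_e1[OF Kp] by simp
  have Qpos: "\<forall>h. \<forall>k<K. 0 < qL K h k" using qL_pos[OF Kp] by blast
  have Qsum: "(\<Sum>k<K. qL K h k) = 1" for h using qL_sum[OF Kp] by simp
  have fnn: "\<forall>h. 0 \<le> f h"
    unfolding f_eq using gibbs(1)[of K P] Pnn Qpos Psum Qsum by (simp add: less_imp_le)
  have lim1: "((\<lambda>t. qL K (u t) k) \<longlongrightarrow> P k) at_bot" if k: "k < K" for k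
  proof (cases "k = 0")
    case True
    have "((\<lambda>t. exp t / (exp t + (real K - 1))) \<longlongrightarrow> 0) at_bot"
      using K1 by (intro lim_bot)
    then show ?thesis unfolding u_def using qL_u[OF k] True P0 by simp
  next
    case False
    have "((\<lambda>t. 1 / (exp t + (real K - 1))) \<longlongrightarrow> 1 / (real K - 1)) at_bot"
      using K1 by (intro lim_bot)
    then show ?thesis unfolding u_def using qL_u[OF k] False Pk by simp
  qed
  have lim: "((\<lambda>t. f (u t)) \<longlongrightarrow> 0) at_bot"
    unfolding f_eq using Pnn lim1 Qpos by (intro kl_tendsto) auto
  have uA: "\<forall>t. u t \<in> A" unfolding u_def A_def using K2 by auto
  have INF0: "(INF h\<in>A. f h) = 0"
    using fnn uA lim by (intro inf_zero) auto
  have na: "\<not> (\<exists>g. g (K - 1) = 0 \<and> f g = (INF h\<in>A. f h))"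
  proof
    assume "\<exists>g. g (K - 1) = 0 \<and> f g = (INF h\<in>A. f h)"
    then obtain g where "f g = 0" using INF0 by auto
    then have "\<forall>k<K. P k = qL K g k"
      using gibbs(2)[of K P "qL K g"] Pnn Qpos Psum Qsum unfolding f_eq
      by (simp add: less_imp_le)
    then have "P 0 = qL K g 0" using Kp by auto
    then show False using qL_pos[OF Kp, of g 0] P0 by simp
  qed
  have "\<not> (\<exists>g. g (K - 1) = 0 \<and> f g = (INF h\<in>A. f h)) \<and> ((\<lambda>t. f (u t)) \<longlongrightarrow> (INF h\<in>A. f h)) at_bot"
    using na lim INF0 by simp
  then show ?thesis unfolding f_def u_def A_def \<alpha>_def Let_def .
qed

lemma B8K:
  fixes \<alpha> :: real
  assumes "K = 2" "1 < \<alpha> \<and> \<alpha> \<le> 2" "p \<in> smooth_pre K \<alpha>"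
  shows "DSKL K \<alpha> p (qL K g) = DSKL K (2 - \<alpha>) (\<lambda>k. 1 - p k) (qL K (\<lambda>k. - g k))
          \<and> DSKL K (2 - \<alpha>) (\<lambda>k. 1 - p k) (qL K (\<lambda>k. - g k)) = DSKL K (2 - \<alpha>) p (qL K g)
          \<and> DSKL K \<alpha> p (qRL K \<alpha> g) = DSKL K (2 - \<alpha>) (\<lambda>k. 1 - p k) (qRL K (2 - \<alpha>) g)
          \<and> DSKL K (2 - \<alpha>) (\<lambda>k. 1 - p k) (qRL K (2 - \<alpha>) g) = DSKL K (2 - \<alpha>) p (qRL K (2 - \<alpha>) (\<lambda>k. - g k))
          \<and> 0 \<le> 2 - \<alpha> \<and> 2 - \<alpha> < 1
          \<and> (\<lambda>k. 1 - p k) \<in> smooth_pre K (2 - \<alpha>)"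
  using assms(2,3) unfolding assms(1) by (rule B8_single)

lemma qRL0: "qRL K 0 = qL K"
  by (intro ext) (simp add: qRL_def)

theorem theorem1:
  fixes K :: nat
  assumes K2: "K \<ge> 2"
  shows
  \<comment> \<open>(B1)\<close>
  "(\<forall>\<alpha>::real. 0 \<le> \<alpha> \<and> \<alpha> < 1 \<longrightarrow>
      (\<forall>k<K. (\<lambda>g. qRL K \<alpha> g k) ` UNIV \<subseteq>
                 {- \<alpha> / (real K * (1 - \<alpha>)) .. (real K - \<alpha>) / (real K * (1 - \<alpha>))}
            \<and> closure ((\<lambda>g. qRL K \<alpha> g k) ` UNIV) =
                 {- \<alpha> / (real K * (1 - \<alpha>)) .. (real K - \<alpha>) / (real K * (1 - \<alpha>))})
      \<and> {0..1} \<subseteq> {- \<alpha> / (real K * (1 - \<alpha>)) .. (real K - \<alpha>) / (real K * (1 - \<alpha>))})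
 \<and> (\<forall>\<alpha>::real. 1 < \<alpha> \<and> \<alpha> \<le> real K / (real K - 1) \<longrightarrow>
      (\<forall>k<K. (\<lambda>g. qRL K \<alpha> g k) ` UNIV \<subseteq>
                 {(real K - \<alpha>) / (real K * (1 - \<alpha>)) .. - \<alpha> / (real K * (1 - \<alpha>))}
            \<and> closure ((\<lambda>g. qRL K \<alpha> g k) ` UNIV) =
                 {(real K - \<alpha>) / (real K * (1 - \<alpha>)) .. - \<alpha> / (real K * (1 - \<alpha>))})
      \<and> {0..1} \<subseteq> {(real K - \<alpha>) / (real K * (1 - \<alpha>)) .. - \<alpha> / (real K * (1 - \<alpha>))})
  \<comment> \<open>(B2)\<close>
 \<and> (\<forall>\<alpha>::real. \<forall>g. \<alpha> \<noteq> 1 \<longrightarrow> (\<Sum>k<K. qRL K \<alpha> g k) = 1)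
  \<comment> \<open>(B3)\<close>
 \<and> (\<forall>\<alpha>::real. (0 \<le> \<alpha> \<and> \<alpha> < 1) \<or> (1 < \<alpha> \<and> \<alpha> \<le> real K / (real K - 1)) \<longrightarrow>
      (\<forall>p q. p \<in> smooth_pre K \<alpha> \<longrightarrow> q \<in> smooth_pre K \<alpha> \<longrightarrow>
          DSKL K \<alpha> p q \<ge> 0 \<and> (DSKL K \<alpha> p q = 0 \<longleftrightarrow> (\<forall>k<K. p k = q k))))
 \<and> (\<forall>p q. p \<in> smooth_pre K 1 \<longrightarrow> q \<in> smooth_pre K 1 \<longrightarrow> DSKL K 1 p q = 0)
  \<comment> \<open>(B4)\<close>
 \<and> (\<forall>\<alpha>::real. 0 \<le> \<alpha> \<and> \<alpha> \<le> real K / (real K - 1) \<longrightarrow>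
      (\<forall>p1 p2 q1 q2 r. p1 \<in> smooth_pre K \<alpha> \<longrightarrow> p2 \<in> smooth_pre K \<alpha> \<longrightarrow>
          q1 \<in> smooth_pre K \<alpha> \<longrightarrow> q2 \<in> smooth_pre K \<alpha> \<longrightarrow> 0 \<le> r \<longrightarrow> r \<le> 1 \<longrightarrow>
          DSKL K \<alpha> (\<lambda>k. r * p1 k + (1 - r) * p2 k) (\<lambda>k. r * q1 k + (1 - r) * q2 k)
            \<le> ereal r * DSKL K \<alpha> p1 q1 + ereal (1 - r) * DSKL K \<alpha> p2 q2))
  \<comment> \<open>(B5)\<close>
 \<and> (\<forall>\<alpha>::real. (0 \<le> \<alpha> \<and> \<alpha> < 1) \<or> (1 < \<alpha> \<and> \<alpha> \<le> real K / (real K - 1)) \<longrightarrow>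
      \<not> (\<exists>g. g (K - 1) = 0 \<and>
             DSKL K \<alpha> (\<lambda>k. if k = 0 then 1 else 0) (qL K g)
               = (INF h\<in>{h. h (K - 1) = 0}. DSKL K \<alpha> (\<lambda>k. if k = 0 then 1 else 0) (qL K h)))
      \<and> ((\<lambda>t. DSKL K \<alpha> (\<lambda>k. if k = 0 then 1 else 0) (qL K (\<lambda>k. if k = 0 then t else 0)))
           \<longlongrightarrow> (INF h\<in>{h. h (K - 1) = 0}. DSKL K \<alpha> (\<lambda>k. if k = 0 then 1 else 0) (qL K h))) at_top)
  \<comment> \<open>(B6), alpha = 0\<close>
 \<and> (\<not> (\<exists>g. g (K - 1) = 0 \<and>
             DSKL K 0 (\<lambda>k. if k = 0 then 1 else 0) (qRL K 0 g)
               = (INF h\<in>{h. h (K - 1) = 0}. DSKL K 0 (\<lambda>k. if k = 0 then 1 else 0) (qRL K 0 h)))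
      \<and> ((\<lambda>t. DSKL K 0 (\<lambda>k. if k = 0 then 1 else 0) (qRL K 0 (\<lambda>k. if k = 0 then t else 0)))
           \<longlongrightarrow> (INF h\<in>{h. h (K - 1) = 0}. DSKL K 0 (\<lambda>k. if k = 0 then 1 else 0) (qRL K 0 h))) at_top)
  \<comment> \<open>(B6), alpha in (0,1) or (1, K/(K-1))\<close>
 \<and> (\<forall>\<alpha>::real. (0 < \<alpha> \<and> \<alpha> < 1) \<or> (1 < \<alpha> \<and> \<alpha> < real K / (real K - 1)) \<longrightarrow>
      (\<forall>g. g (K - 1) = 0 \<longrightarrow>
          (DSKL K \<alpha> (\<lambda>k. if k = 0 then 1 else 0) (qRL K \<alpha> g)
             = (INF h\<in>{h. h (K - 1) = 0}. DSKL K \<alpha> (\<lambda>k. if k = 0 then 1 else 0) (qRL K \<alpha> h))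
           \<longleftrightarrow> (\<forall>k<K. g k = (if k = 0 then ln (real K / \<alpha> + 1 - real K) else 0)))))
  \<comment> \<open>(B6), alpha = K/(K-1)\<close>
 \<and> (let \<alpha> = real K / (real K - 1) in
     \<not> (\<exists>g. g (K - 1) = 0 \<and>
             DSKL K \<alpha> (\<lambda>k. if k = 0 then 1 else 0) (qRL K \<alpha> g)
               = (INF h\<in>{h. h (K - 1) = 0}. DSKL K \<alpha> (\<lambda>k. if k = 0 then 1 else 0) (qRL K \<alpha> h)))
      \<and> ((\<lambda>t. DSKL K \<alpha> (\<lambda>k. if k = 0 then 1 else 0) (qRL K \<alpha> (\<lambda>k. if k = 0 then t else 0)))
           \<longlongrightarrow> (INF h\<in>{h. h (K - 1) = 0}. DSKL K \<alpha> (\<lambda>k. if k = 0 then 1 else 0) (qRL K \<alpha> h))) at_bot)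
  \<comment> \<open>(B7)\<close>
 \<and> (\<forall>\<alpha>::real. 1 < \<alpha> \<and> \<alpha> \<le> real K / (real K - 1) \<longrightarrow>
      (\<forall>p q g. p \<in> smooth_pre K \<alpha> \<longrightarrow> q \<in> smooth_pre K \<alpha> \<longrightarrow>
          DSKL K \<alpha> p q = DSKL K (real K - (real K - 1) * \<alpha>)
                (\<lambda>k. (1 - p k) / (real K - 1)) (\<lambda>k. (1 - q k) / (real K - 1))
        \<and> DSKL K \<alpha> p (qRL K \<alpha> g) = DSKL K (real K - (real K - 1) * \<alpha>)
                (\<lambda>k. (1 - p k) / (real K - 1)) (qRL K (real K - (real K - 1) * \<alpha>) g)
        \<and> 0 \<le> real K - (real K - 1) * \<alpha> \<and> real K - (real K - 1) * \<alpha> < 1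
        \<and> (\<lambda>k. (1 - p k) / (real K - 1)) \<in> smooth_pre K (real K - (real K - 1) * \<alpha>)))
  \<comment> \<open>(B8)\<close>
 \<and> (K = 2 \<longrightarrow>
      (\<forall>\<alpha>::real. 1 < \<alpha> \<and> \<alpha> \<le> 2 \<longrightarrow>
        (\<forall>p g. p \<in> smooth_pre K \<alpha> \<longrightarrow>
            DSKL K \<alpha> p (qL K g) = DSKL K (2 - \<alpha>) (\<lambda>k. 1 - p k) (qL K (\<lambda>k. - g k))
          \<and> DSKL K (2 - \<alpha>) (\<lambda>k. 1 - p k) (qL K (\<lambda>k. - g k)) = DSKL K (2 - \<alpha>) p (qL K g)
          \<and> DSKL K \<alpha> p (qRL K \<alpha> g) = DSKL K (2 - \<alpha>) (\<lambda>k. 1 - p k) (qRL K (2 - \<alpha>) g)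
          \<and> DSKL K (2 - \<alpha>) (\<lambda>k. 1 - p k) (qRL K (2 - \<alpha>) g) = DSKL K (2 - \<alpha>) p (qRL K (2 - \<alpha>) (\<lambda>k. - g k))
          \<and> 0 \<le> 2 - \<alpha> \<and> 2 - \<alpha> < 1
          \<and> (\<lambda>k. 1 - p k) \<in> smooth_pre K (2 - \<alpha>))))"
  apply (intro conjI)
  subgoal by (intro allI impI B1a_single[OF K2])
  subgoal by (intro allI impI B1b_single[OF K2])
  subgoal by (intro allI impI B2_single[OF K2])
  subgoal apply (intro allI impI) apply (rule B3_single[OF K2]) by auto
  subgoal by (intro allI impI B3b_single)
  subgoal apply (intro allI impI) apply (rule B4_single) by assumption+
  subgoal apply (intro allI impI) apply (rule B5_single[OF K2]) by assumption
  subgoal unfolding qRL0 by (rule conjunct1[OF B5_single[OF K2 disjI1[OF conjI[OF order_refl zero_less_one]]]])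
  subgoal unfolding qRL0 by (rule conjunct2[OF B5_single[OF K2 disjI1[OF conjI[OF order_refl zero_less_one]]]])
  subgoal apply (intro allI impI) apply (rule B6b_single[OF K2]) by assumption+
  subgoal by (rule B6c_single[OF K2])
  subgoal apply (intro allI impI) apply (rule B7_single[OF K2]) by assumption+
  subgoal apply (intro allI impI) apply (rule B8K) by assumption+
  done

end
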